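(* Let $\varphi\in C_0^\infty(\mathbb{R}^d)$ be a radial non-negative function supported in the unit ball, decreasing as the radius grows, with $\varphi(x)=1$ for $|x|\leq\frac34$. Let $\mu$ be a positive Borel measure on $\mathbb{R}^d$ such that $\mu(B_r(x))\leq r^{\alpha}$ for every open ball $B_r(x)$. Let $\nu$ be a signed measure absolutely continuous with respect to $\mu$. Then there is a constant $C$ such that for every disjoint family $\mathfrak{B}$ of open balls, $$\sum_{B_{r_j}(x_j)\in\mathfrak{B}}\left|\int\varphi\Big(\frac{y-x_j}{r_j}\Big)\,d\nu(y)\right|\leq C\, g\Big(\sum_{B_{r_j}(x_j)\in\mathfrak{B}} r_j^{\alpha}\Big),\qquad g(t)=\int_0^t\Big|\frac{d\nu}{d\mu}\Big|^*(s)\,ds.$$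
   Context: $\frac{d\nu}{d\mu}$ is the density of $\nu$ with respect to $\mu$. For a function $F$, its monotonic rearrangement (with respect to $\mu$) is $F^*(t)=\sup\{\beta : \mu\{x : F(x)>\beta\}\leq t\}$. A disjoint family of balls is one in which no two balls intersect. *)

theory Defs
  imports "HOL-Analysis.Analysis"
begin

text \<open>C-infinity functions on a Euclidean space: differentiable everywhere and every
  directional derivative is again C-infinity (greatest fixed point).\<close>
coinductive smooth_fun :: "('a::euclidean_space \<Rightarrow> real) \<Rightarrow> bool" where
  "(\<forall>x. f differentiable (at x)) \<Longrightarrow>
   (\<forall>v. smooth_fun (\<lambda>x. frechet_derivative f (at x) v)) \<Longrightarrow> smooth_fun f"

definition rearrangement :: "'a measure \<Rightarrow> ('a \<Rightarrow> real) \<Rightarrow> real \<Rightarrow> ennreal" where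
  "rearrangement M F t =
     (INF \<beta> \<in> {\<beta>::real. 0 \<le> \<beta> \<and> emeasure M {x \<in> space M. F x > \<beta>} \<le> ennreal t}. ennreal \<beta>)"

definition rearr_integral :: "'a measure \<Rightarrow> ('a \<Rightarrow> real) \<Rightarrow> ennreal \<Rightarrow> ennreal" where
  "rearr_integral M f T =
     (\<integral>\<^sup>+ s. indicator {s. 0 \<le> s \<and> ennreal s \<le> T} s * rearrangement M (\<lambda>x. \<bar>f x\<bar>) s \<partial>lborel)"

end

theory Submission
  imports Defs
begin

lemma antimono_ennreal_measurable:
  fixes g :: "real \<Rightarrow> ennreal"
  assumes "\<And>x y. x \<le> y \<Longrightarrow> g y \<le> g x"
  shows "g \<in> borel_measurable borel"
proof (rule borel_measurableI_greater)
  fix y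
  have "is_interval {x. y < g x}"
    unfolding is_interval_1
  proof (intro ballI allI impI)
    fix a b x assume "a \<in> {x. y < g x}" "b \<in> {x. y < g x}" "a \<le> x \<and> x \<le> b"
    then show "x \<in> {x. y < g x}" using assms[of x b] by auto
  qed
  then show "{x \<in> space borel. y < g x} \<in> sets borel"
    using real_interval_borel_measurable by simp
qed

lemma rearr_antimono:
  assumes "s \<le> s'"
  shows "rearrangement M F s' \<le> rearrangement M F s"
  unfolding rearrangement_def
  by (rule INF_superset_mono) (use assms in \<open>auto intro: order_trans[OF _ ennreal_leI]\<close>)

lemma rearr_lower:
  fixes \<beta> s :: real
  assumes F: "F \<in> borel_measurable M"
  assumes "0 \<le> \<beta>" "ennreal s < emeasure M {x \<in> space M. F x > \<beta>}"
  shows "ennreal \<beta> \<le> rearrangement M F s"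
  unfolding rearrangement_def
proof (rule INF_greatest)
  fix \<gamma> assume g: "\<gamma> \<in> {\<beta>::real. 0 \<le> \<beta> \<and> emeasure M {x \<in> space M. F x > \<beta>} \<le> ennreal s}"
  show "ennreal \<beta> \<le> ennreal \<gamma>"
  proof (rule ccontr)
    assume "\<not> ?thesis"
    then have "\<gamma> < \<beta>" using g by (auto simp add: not_le ennreal_less_iff)
    then have "{x \<in> space M. F x > \<beta>} \<subseteq> {x \<in> space M. F x > \<gamma>}" by auto
    then have "emeasure M {x \<in> space M. F x > \<beta>} \<le> emeasure M {x \<in> space M. F x > \<gamma>}"
      by (rule emeasure_mono) (use F in measurable)
    then show False using g assms(3) by auto
  qed
qed

lemma core:
  fixes f :: "'a \<Rightarrow> real"
  assumes f[measurable]: "f \<in> borel_measurable M"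
    and E[measurable]: "E \<in> sets M" and ET: "emeasure M E \<le> T" and Efin: "emeasure M E < \<infinity>"
  shows "(\<integral>\<^sup>+x. indicator E x * ennreal \<bar>f x\<bar> \<partial>M) \<le> rearr_integral M f T"
proof -
  define R where "R = rearrangement M (\<lambda>x. \<bar>f x\<bar>)"
  have Rm[measurable]: "R \<in> borel_measurable borel"
    unfolding R_def by (rule antimono_ennreal_measurable) (rule rearr_antimono)
  define N where "N = density M (indicator E)"
  have sN: "sets N = sets M" "space N = space M" unfolding N_def by auto
  have fN[measurable]: "f \<in> borel_measurable N" using f by (simp add: measurable_cong_sets[OF sN(1) refl])
  have "emeasure N (space N) = emeasure M E"
    unfolding N_def by (subst emeasure_density) (auto simp: nn_integral_indicator)
  then interpret N: finite_measure N using Efin by (intro finite_measureI) auto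
  interpret NL: pair_sigma_finite N lborel ..
  have G[measurable]: "Measurable.pred (N \<Otimes>\<^sub>M borel) (\<lambda>p. snd p \<in> {0..<\<bar>f (fst p)\<bar>})"
    unfolding atLeastLessThan_iff by measurable
  have "(\<integral>\<^sup>+x. indicator E x * ennreal \<bar>f x\<bar> \<partial>M) = (\<integral>\<^sup>+x. ennreal \<bar>f x\<bar> \<partial>N)"
    unfolding N_def by (subst nn_integral_density) auto
  also have "\<dots> = (\<integral>\<^sup>+x. (\<integral>\<^sup>+\<beta>. indicator {0..<\<bar>f x\<bar>} \<beta> \<partial>lborel) \<partial>N)"
    by (simp add: nn_integral_indicator)
  also have "\<dots> = (\<integral>\<^sup>+\<beta>. (\<integral>\<^sup>+x. indicator {0..<\<bar>f x\<bar>} \<beta> \<partial>N) \<partial>lborel)"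
    by (rule NL.Fubini'[symmetric]) measurable
  also have "\<dots> \<le> (\<integral>\<^sup>+\<beta>. (\<integral>\<^sup>+s. indicator {s. 0 \<le> s \<and> ennreal s \<le> T \<and> 0 \<le> \<beta> \<and> ennreal \<beta> \<le> R s} s \<partial>lborel) \<partial>lborel)"
  proof (rule nn_integral_mono)
    fix \<beta> :: real
    show "(\<integral>\<^sup>+x. indicator {0..<\<bar>f x\<bar>} \<beta> \<partial>N) \<le> (\<integral>\<^sup>+s. indicator {s. 0 \<le> s \<and> ennreal s \<le> T \<and> 0 \<le> \<beta> \<and> ennreal \<beta> \<le> R s} s \<partial>lborel)"
    proof (cases "0 \<le> \<beta>")
      case False
      then show ?thesis by (simp add: indicator_def)
    next
      case b: True
      define A where "A = {x \<in> space M. \<bar>f x\<bar> > \<beta>}"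
      have A[measurable]: "A \<in> sets M" unfolding A_def by measurable
      define S where "S = {s. 0 \<le> s \<and> ennreal s \<le> T \<and> 0 \<le> \<beta> \<and> ennreal \<beta> \<le> R s}"
      have S[measurable]: "S \<in> sets borel" unfolding S_def by measurable
      have "(\<integral>\<^sup>+x. indicator {0..<\<bar>f x\<bar>} \<beta> \<partial>N) = (\<integral>\<^sup>+x. indicator A x \<partial>N)"
        by (rule nn_integral_cong) (use b in \<open>auto simp: A_def sN indicator_def\<close>)
      also have "\<dots> = emeasure N A" using A sN by simp
      also have "\<dots> = (\<integral>\<^sup>+x. indicator E x * indicator A x \<partial>M)"
        unfolding N_def by (rule emeasure_density) auto
      finally have m: "(\<integral>\<^sup>+x. indicator {0..<\<bar>f x\<bar>} \<beta> \<partial>N) = (\<integral>\<^sup>+x. indicator E x * indicator A x \<partial>M)" .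
      define m where "m = (\<integral>\<^sup>+x. indicator E x * indicator A x \<partial>M)"
      have mT: "m \<le> T"
      proof -
        have "m \<le> (\<integral>\<^sup>+x. indicator E x \<partial>M)" unfolding m_def
          by (rule nn_integral_mono) (auto simp: indicator_def)
        then show ?thesis using ET by simp
      qed
      have md: "m \<le> emeasure M A"
      proof -
        have "m \<le> (\<integral>\<^sup>+x. indicator A x \<partial>M)" unfolding m_def
          by (rule nn_integral_mono) (auto simp: indicator_def)
        then show ?thesis by simp
      qed
      have sub: "{0..<t} \<subseteq> S" if "ennreal t \<le> m" for t
      proof
        fix s assume s: "s \<in> {0..<t}"
        then have "ennreal s < ennreal t" by (simp add: ennreal_lessI)
        then have "ennreal s < m" using that by order
        then show "s \<in> S" unfolding S_def R_def using s b mT md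
          by (auto intro!: rearr_lower simp: A_def)
      qed
      have "m \<le> emeasure lborel S"
      proof (cases m)
        case (real t)
        then have "{0..<t} \<subseteq> S" using sub by simp
        then have "emeasure lborel {0..<t} \<le> emeasure lborel S" by (rule emeasure_mono) simp
        then show ?thesis using real by simp
      next
        case top
        have "ennreal (real n) \<le> emeasure lborel S" for n
        proof -
          have "{0..<real n} \<subseteq> S" using sub top by simp
          then have "emeasure lborel {0..<real n} \<le> emeasure lborel S" by (rule emeasure_mono) simp
          then show ?thesis by simp
        qed
        then have "(SUP n. of_nat n :: ennreal) \<le> emeasure lborel S"
          by (intro SUP_least) (simp add: ennreal_of_nat_eq_real_of_nat)
        then have "emeasure lborel S = \<infinity>"
          by (simp add: ennreal_SUP_of_nat_eq_top top_unique)
        then show ?thesis by simp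
      qed
      then show ?thesis using m unfolding m_def S_def by (simp add: nn_integral_indicator)
    qed
  qed
  also have "\<dots> = (\<integral>\<^sup>+s. (\<integral>\<^sup>+\<beta>. indicator {s. 0 \<le> s \<and> ennreal s \<le> T \<and> 0 \<le> \<beta> \<and> ennreal \<beta> \<le> R s} s \<partial>lborel) \<partial>lborel)"
    by (rule lborel_pair.Fubini') measurable
  also have "\<dots> \<le> rearr_integral M f T"
    unfolding rearr_integral_def R_def[symmetric]
  proof (rule nn_integral_mono)
    fix s :: real
    show "(\<integral>\<^sup>+\<beta>. indicator {s. 0 \<le> s \<and> ennreal s \<le> T \<and> 0 \<le> \<beta> \<and> ennreal \<beta> \<le> R s} s \<partial>lborel)
       \<le> indicator {s. 0 \<le> s \<and> ennreal s \<le> T} s * R s"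
    proof (cases "0 \<le> s \<and> ennreal s \<le> T")
      case False
      then have z: "(\<lambda>\<beta>. indicator {s. 0 \<le> s \<and> ennreal s \<le> T \<and> 0 \<le> \<beta> \<and> ennreal \<beta> \<le> R s} s) = (\<lambda>_. 0::ennreal)"
        by (auto simp: fun_eq_iff indicator_def)
      show ?thesis unfolding z using False by simp
    next
      case True
      have "(\<integral>\<^sup>+\<beta>. indicator {s. 0 \<le> s \<and> ennreal s \<le> T \<and> 0 \<le> \<beta> \<and> ennreal \<beta> \<le> R s} s \<partial>lborel)
          = emeasure lborel {\<beta>. 0 \<le> \<beta> \<and> ennreal \<beta> \<le> R s}"
      proof -
        have z: "(\<lambda>\<beta>. indicator {s. 0 \<le> s \<and> ennreal s \<le> T \<and> 0 \<le> \<beta> \<and> ennreal \<beta> \<le> R s} s) = indicator {\<beta>. 0 \<le> \<beta> \<and> ennreal \<beta> \<le> R s}"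
          using True by (auto simp: fun_eq_iff indicator_def)
        have "{\<beta>. 0 \<le> \<beta> \<and> ennreal \<beta> \<le> R s} \<in> sets borel" by measurable
        then show ?thesis unfolding z by simp
      qed
      also have "\<dots> \<le> R s"
      proof (cases "R s")
        case (real r)
        then have "{\<beta>. 0 \<le> \<beta> \<and> ennreal \<beta> \<le> R s} \<subseteq> {0..r}" by auto
        then have "emeasure lborel {\<beta>. 0 \<le> \<beta> \<and> ennreal \<beta> \<le> R s} \<le> emeasure lborel {0..r}"
          by (rule emeasure_mono) simp
        then show ?thesis using real by simp
      qed simp
      finally show ?thesis using True by simp
    qed
  qed
  finally show ?thesis .
qed

lemma phi_bound:
  fixes \<phi> :: "'a::euclidean_space \<Rightarrow> real"
  assumes phi_nonneg: "\<And>x. \<phi> x \<ge> 0"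
    and phi_decr: "\<And>x y. norm x \<le> norm y \<Longrightarrow> \<phi> y \<le> \<phi> x"
    and phi_supp: "\<And>x. norm x \<ge> 1 \<Longrightarrow> \<phi> x = 0"
    and phi_one: "\<And>x. norm x \<le> 3/4 \<Longrightarrow> \<phi> x = 1"
    and r: "r > 0"
  shows "ennreal \<bar>\<integral>y. \<phi> ((1 / r) *\<^sub>R (y - x)) * f y \<partial>\<mu>\<bar> \<le> (\<integral>\<^sup>+y. indicator (ball x r) y * ennreal \<bar>f y\<bar> \<partial>\<mu>)"
proof (cases "integrable \<mu> (\<lambda>y. \<phi> ((1 / r) *\<^sub>R (y - x)) * f y)")
  case True
  have "ennreal \<bar>\<integral>y. \<phi> ((1 / r) *\<^sub>R (y - x)) * f y \<partial>\<mu>\<bar> \<le> (\<integral>\<^sup>+y. norm (\<phi> ((1 / r) *\<^sub>R (y - x)) * f y) \<partial>\<mu>)"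
    using integral_norm_bound_ennreal[OF True] by simp
  also have "\<dots> \<le> (\<integral>\<^sup>+y. indicator (ball x r) y * ennreal \<bar>f y\<bar> \<partial>\<mu>)"
  proof (rule nn_integral_mono)
    fix y
    have le1: "\<phi> z \<le> 1" for z using phi_decr[of 0 z] phi_one[of 0] by simp
    show "ennreal (norm (\<phi> ((1 / r) *\<^sub>R (y - x)) * f y)) \<le> indicator (ball x r) y * ennreal \<bar>f y\<bar>"
    proof (cases "y \<in> ball x r")
      case True
      have "\<bar>\<phi> ((1 / r) *\<^sub>R (y - x)) * f y\<bar> \<le> \<bar>f y\<bar>"
        using le1[of "(1 / r) *\<^sub>R (y - x)"] phi_nonneg[of "(1 / r) *\<^sub>R (y - x)"]
        by (simp add: abs_mult mult_left_le_one_le)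
      then show ?thesis using True by (simp add: ennreal_leI)
    next
      case False
      then have "dist x y \<ge> r" by simp
      then have "norm ((1 / r) *\<^sub>R (y - x)) \<ge> 1" using r
        by (simp add: dist_norm norm_minus_commute divide_simps)
      then show ?thesis using False phi_supp by simp
    qed
  qed
  finally show ?thesis .
next
  case False
  then show ?thesis by (simp add: not_integrable_integral_eq)
qed

lemma finite_case:
  fixes \<phi> :: "'a::euclidean_space \<Rightarrow> real"
  assumes phi_nonneg: "\<And>x. \<phi> x \<ge> 0"
    and phi_decr: "\<And>x y. norm x \<le> norm y \<Longrightarrow> \<phi> y \<le> \<phi> x"
    and phi_supp: "\<And>x. norm x \<ge> 1 \<Longrightarrow> \<phi> x = 0"
    and phi_one: "\<And>x. norm x \<le> 3/4 \<Longrightarrow> \<phi> x = 1"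
    and mu_borel: "sets \<mu> = sets borel"
    and mu_balls: "\<And>x r. r > 0 \<Longrightarrow> emeasure \<mu> (ball x r) \<le> ennreal (r powr \<alpha>)"
    and fm: "f \<in> borel_measurable \<mu>"
    and F: "finite F"
    and pos: "\<forall>(x, r) \<in> F. r > 0"
    and disj: "\<forall>(x, r) \<in> F. \<forall>(x', r') \<in> F. (x, r) \<noteq> (x', r') \<longrightarrow> ball x r \<inter> ball x' r' = {}"
  shows "(\<Sum>(x, r) \<in> F. ennreal \<bar>\<integral>y. \<phi> ((1 / r) *\<^sub>R (y - x)) * f y \<partial>\<mu>\<bar>)
           \<le> rearr_integral \<mu> f (\<Sum>(x, r) \<in> F. ennreal (r powr \<alpha>))"
proof -
  have bm: "ball x r \<in> sets \<mu>" for x r by (simp add: mu_borel)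
  define E where "E = (\<Union>p\<in>F. (\<lambda>(x, r). ball x r) p)"
  have Em: "E \<in> sets \<mu>" unfolding E_def using F bm by (intro sets.finite_UN) auto
  have dj: "disjoint_family_on (\<lambda>(x, r). ball x r) F"
    using disj unfolding disjoint_family_on_def by fast
  have "(\<Sum>(x, r) \<in> F. ennreal \<bar>\<integral>y. \<phi> ((1 / r) *\<^sub>R (y - x)) * f y \<partial>\<mu>\<bar>)
      \<le> (\<Sum>(x, r) \<in> F. (\<integral>\<^sup>+y. indicator (ball x r) y * ennreal \<bar>f y\<bar> \<partial>\<mu>))"
    by (rule sum_mono) (use pos in \<open>auto intro!: phi_bound[OF phi_nonneg phi_decr phi_supp phi_one]\<close>)
  also have "\<dots> = (\<integral>\<^sup>+y. (\<Sum>p \<in> F. indicator ((\<lambda>(x, r). ball x r) p) y * ennreal \<bar>f y\<bar>) \<partial>\<mu>)"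
    by (subst nn_integral_sum) (use fm bm in \<open>auto simp: case_prod_beta\<close>)
  also have "\<dots> = (\<integral>\<^sup>+y. indicator E y * ennreal \<bar>f y\<bar> \<partial>\<mu>)"
    unfolding E_def indicator_UN_disjoint[OF F dj] sum_distrib_right ..
  also have "\<dots> \<le> rearr_integral \<mu> f (\<Sum>(x, r) \<in> F. ennreal (r powr \<alpha>))"
  proof (rule core[OF fm Em])
    have "emeasure \<mu> E \<le> (\<Sum>p\<in>F. emeasure \<mu> ((\<lambda>(x, r). ball x r) p))"
      unfolding E_def using F bm by (intro emeasure_subadditive_finite) auto
    also have "\<dots> \<le> (\<Sum>(x, r) \<in> F. ennreal (r powr \<alpha>))"
      by (rule sum_mono) (use pos mu_balls in auto)
    finally show "emeasure \<mu> E \<le> (\<Sum>(x, r) \<in> F. ennreal (r powr \<alpha>))" .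
    moreover have "(\<Sum>(x, r) \<in> F. ennreal (r powr \<alpha>)) < \<infinity>"
      by (simp add: case_prod_beta sum_Pinfty less_top)
    ultimately show "emeasure \<mu> E < \<infinity>" by order
  qed
  finally show ?thesis .
qed

theorem lemma16:
  fixes \<phi> :: "'a::euclidean_space \<Rightarrow> real"
    and \<mu> :: "'a measure"
    and \<alpha> :: real
    and f :: "'a \<Rightarrow> real"
  assumes phi_smooth: "smooth_fun \<phi>"
    and phi_radial: "\<And>x y. norm x = norm y \<Longrightarrow> \<phi> x = \<phi> y"
    and phi_nonneg: "\<And>x. \<phi> x \<ge> 0"
    and phi_decr: "\<And>x y. norm x \<le> norm y \<Longrightarrow> \<phi> y \<le> \<phi> x"
    and phi_supp: "\<And>x. norm x \<ge> 1 \<Longrightarrow> \<phi> x = 0"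
    and phi_one: "\<And>x. norm x \<le> 3/4 \<Longrightarrow> \<phi> x = 1"
    and mu_borel: "sets \<mu> = sets borel"
    and mu_balls: "\<And>x r. r > 0 \<Longrightarrow> emeasure \<mu> (ball x r) \<le> ennreal (r powr \<alpha>)"
    and nu_density: "f \<in> borel_measurable \<mu>" "integrable \<mu> f"
  shows "\<exists>C::real. \<forall>\<B> :: ('a \<times> real) set.
           (\<forall>(x, r) \<in> \<B>. r > 0) \<longrightarrow>
           (\<forall>(x, r) \<in> \<B>. \<forall>(x', r') \<in> \<B>. (x, r) \<noteq> (x', r') \<longrightarrow> ball x r \<inter> ball x' r' = {}) \<longrightarrow>
           (\<Sum>\<^sub>\<infinity>(x, r) \<in> \<B>. ennreal \<bar>\<integral>y. \<phi> ((1 / r) *\<^sub>R (y - x)) * f y \<partial>\<mu>\<bar>)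
             \<le> ennreal C * rearr_integral \<mu> f (\<Sum>\<^sub>\<infinity>(x, r) \<in> \<B>. ennreal (r powr \<alpha>))"
proof -
  have "\<forall>\<B> :: ('a \<times> real) set.
           (\<forall>(x, r) \<in> \<B>. r > 0) \<longrightarrow>
           (\<forall>(x, r) \<in> \<B>. \<forall>(x', r') \<in> \<B>. (x, r) \<noteq> (x', r') \<longrightarrow> ball x r \<inter> ball x' r' = {}) \<longrightarrow>
           (\<Sum>\<^sub>\<infinity>(x, r) \<in> \<B>. ennreal \<bar>\<integral>y. \<phi> ((1 / r) *\<^sub>R (y - x)) * f y \<partial>\<mu>\<bar>)
             \<le> ennreal 1 * rearr_integral \<mu> f (\<Sum>\<^sub>\<infinity>(x, r) \<in> \<B>. ennreal (r powr \<alpha>))"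
  proof (intro allI impI)
    fix \<B> :: "('a \<times> real) set"
    assume pos: "\<forall>(x, r) \<in> \<B>. r > 0"
      and disj: "\<forall>(x, r) \<in> \<B>. \<forall>(x', r') \<in> \<B>. (x, r) \<noteq> (x', r') \<longrightarrow> ball x r \<inter> ball x' r' = {}"
    define a where "a = (\<lambda>(x, r). ennreal \<bar>\<integral>y. \<phi> ((1 / r) *\<^sub>R (y - x)) * f y \<partial>\<mu>\<bar>)"
    define b where "b = (\<lambda>(x::'a, r). ennreal (r powr \<alpha>))"
    have "infsum a \<B> \<le> rearr_integral \<mu> f (infsum b \<B>)"
    proof (rule infsum_le_finite_sums)
      show "a summable_on \<B>" by (rule nonneg_summable_on_complete) simp
      fix F assume F: "finite F" "F \<subseteq> \<B>"
      have "sum a F \<le> rearr_integral \<mu> f (sum b F)"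
        unfolding a_def b_def
        by (rule finite_case[OF phi_nonneg phi_decr phi_supp phi_one mu_borel mu_balls nu_density(1) F(1)])
           (use F pos disj in blast)+
      also have "\<dots> \<le> rearr_integral \<mu> f (infsum b \<B>)"
      proof -
        have "sum b F \<le> infsum b \<B>"
          using infsum_mono_neutral[of b F b \<B>] F by (auto simp add: nonneg_summable_on_complete)
        then show ?thesis unfolding rearr_integral_def
          by (intro nn_integral_mono) (auto simp: indicator_def intro: order_trans)
      qed
      finally show "sum a F \<le> rearr_integral \<mu> f (infsum b \<B>)" .
    qed
    then show "(\<Sum>\<^sub>\<infinity>(x, r) \<in> \<B>. ennreal \<bar>\<integral>y. \<phi> ((1 / r) *\<^sub>R (y - x)) * f y \<partial>\<mu>\<bar>)
             \<le> ennreal 1 * rearr_integral \<mu> f (\<Sum>\<^sub>\<infinity>(x, r) \<in> \<B>. ennreal (r powr \<alpha>))"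
      unfolding a_def b_def by simp
  qed
  then show ?thesis by blast
qed

end
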